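(* Each of the following five $8$-dimensional complex Lie algebras is indecomposable (not a direct sum of two nonzero ideals). Each has basis $\mathbf x_1,\dots,\mathbf x_6,\mathbf y_1,\mathbf y_2$, with the listed nonzero brackets (together with those obtained by antisymmetry) and all other brackets of basis elements equal to zero: (1) $N^{8,2}_1$: $[\mathbf x_1,\mathbf x_2]=\mathbf y_1$, $[\mathbf x_3,\mathbf x_4]=\mathbf y_2$, $[\mathbf x_5,\mathbf x_6]=\mathbf y_1+\mathbf y_2$; (2) $N^{8,2}_2$: $[\mathbf x_5,\mathbf x_2]=[\mathbf x_6,\mathbf x_1]=\mathbf y_1$, $[\mathbf x_5,\mathbf x_3]=[\mathbf x_6,\mathbf x_4]=\mathbf y_2$; (3) $N^{8,2}_3$: $[\mathbf x_1,\mathbf x_2]=[\mathbf x_6,\mathbf x_5]=\mathbf y_1$, $[\mathbf x_3,\mathbf x_6]=[\mathbf x_5,\mathbf x_4]=\mathbf y_2$; (4) $N^{8,2}_4$: $[\mathbf x_1,\mathbf x_2]=[\mathbf x_3,\mathbf x_6]=[\mathbf x_5,\mathbf x_4]=\mathbf y_1$, $[\mathbf x_6,\mathbf x_5]=\mathbf y_2$; (5) $N^{8,2}_5$: $[\mathbf x_1,\mathbf x_6]=[\mathbf x_3,\mathbf x_4]=[\mathbf x_5,\mathbf x_2]=\mathbf y_1$, $[\mathbf x_6,\mathbf x_3]=[\mathbf x_4,\mathbf x_5]=\mathbf y_2$. *)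

theory Defs
  imports Complex_Main
begin

datatype basis = X1 | X2 | X3 | X4 | X5 | X6 | Y1 | Y2

type_synonym vec = "basis \<Rightarrow> complex"

definition e :: "basis \<Rightarrow> vec" where
  "e a = (\<lambda>k. if k = a then 1 else 0)"

definition vadd :: "vec \<Rightarrow> vec \<Rightarrow> vec" where
  "vadd u v = (\<lambda>k. u k + v k)"

definition vscale :: "complex \<Rightarrow> vec \<Rightarrow> vec" where
  "vscale c u = (\<lambda>k. c * u k)"

definition vzero :: vec where
  "vzero = (\<lambda>_. 0)"

text \<open>Structure constants: sc a b is the bracket of basis vectors a and b.
 The bracket is its bilinear extension.\<close>
type_synonym struct = "basis \<Rightarrow> basis \<Rightarrow> vec"

definition bracket :: "struct \<Rightarrow> vec \<Rightarrow> vec \<Rightarrow> vec" where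
  "bracket sc u v = (\<lambda>k. \<Sum>a\<in>UNIV. \<Sum>b\<in>UNIV. u a * v b * sc a b k)"

definition from_rels :: "(basis \<times> basis \<times> vec) list \<Rightarrow> struct" where
  "from_rels rs a b = (\<lambda>k. (\<Sum>(p,q,v)\<leftarrow>rs.
      (if p = a \<and> q = b then v k else 0) - (if p = b \<and> q = a then v k else 0)))"

definition is_lie_algebra :: "struct \<Rightarrow> bool" where
  "is_lie_algebra sc \<longleftrightarrow>
     (\<forall>u. bracket sc u u = vzero) \<and>
     (\<forall>u v w. vadd (vadd (bracket sc u (bracket sc v w)) (bracket sc v (bracket sc w u)))
                     (bracket sc w (bracket sc u v)) = vzero)"

definition csubspace :: "vec set \<Rightarrow> bool" where
  "csubspace S \<longleftrightarrow> vzero \<in> S \<and> (\<forall>x\<in>S. \<forall>y\<in>S. vadd x y \<in> S) \<and>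
     (\<forall>c. \<forall>x\<in>S. vscale c x \<in> S)"

definition lie_ideal :: "struct \<Rightarrow> vec set \<Rightarrow> bool" where
  "lie_ideal sc I \<longleftrightarrow> csubspace I \<and> (\<forall>x. \<forall>i\<in>I. bracket sc x i \<in> I)"

definition decomposable :: "struct \<Rightarrow> bool" where
  "decomposable sc \<longleftrightarrow> (\<exists>I J. lie_ideal sc I \<and> lie_ideal sc J \<and>
     I \<noteq> {vzero} \<and> J \<noteq> {vzero} \<and> I \<inter> J = {vzero} \<and>
     (\<forall>v. \<exists>i\<in>I. \<exists>j\<in>J. v = vadd i j))"

definition indecomposable :: "struct \<Rightarrow> bool" where
  "indecomposable sc \<longleftrightarrow> \<not> decomposable sc"

definition N1 :: struct where
  "N1 = from_rels [(X1, X2, e Y1), (X3, X4, e Y2), (X5, X6, vadd (e Y1) (e Y2))]"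

definition N2 :: struct where
  "N2 = from_rels [(X5, X2, e Y1), (X6, X1, e Y1), (X5, X3, e Y2), (X6, X4, e Y2)]"

definition N3 :: struct where
  "N3 = from_rels [(X1, X2, e Y1), (X6, X5, e Y1), (X3, X6, e Y2), (X5, X4, e Y2)]"

definition N4 :: struct where
  "N4 = from_rels [(X1, X2, e Y1), (X3, X6, e Y1), (X5, X4, e Y1), (X6, X5, e Y2)]"

definition N5 :: struct where
  "N5 = from_rels [(X1, X6, e Y1), (X3, X4, e Y1), (X5, X2, e Y1),
                   (X6, X3, e Y2), (X4, X5, e Y2)]"

end

theory Submission imports Defs begin
lemma UNIV_basis: "(UNIV::basis set) = {X1,X2,X3,X4,X5,X6,Y1,Y2}"
  by (auto intro: basis.exhaust)
definition wd :: "basis \<Rightarrow> basis \<Rightarrow> vec \<Rightarrow> vec \<Rightarrow> complex" where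
  "wd p q u v = u p * v q - u q * v p"

lemmas bsimps = bracket_def from_rels_def UNIV_basis e_def vadd_def wd_def algebra_simps

lemma br_N1: "bracket N1 u v = (\<lambda>k. case k of Y1 \<Rightarrow> wd X1 X2 u v + wd X5 X6 u v
   | Y2 \<Rightarrow> wd X3 X4 u v + wd X5 X6 u v | _ \<Rightarrow> 0)"
  by (rule ext, case_tac k) (simp_all add: N1_def bsimps)
lemma br_N2: "bracket N2 u v = (\<lambda>k. case k of Y1 \<Rightarrow> wd X5 X2 u v + wd X6 X1 u v
   | Y2 \<Rightarrow> wd X5 X3 u v + wd X6 X4 u v | _ \<Rightarrow> 0)"
  by (rule ext, case_tac k) (simp_all add: N2_def bsimps)
lemma br_N3: "bracket N3 u v = (\<lambda>k. case k of Y1 \<Rightarrow> wd X1 X2 u v + wd X6 X5 u v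
   | Y2 \<Rightarrow> wd X3 X6 u v + wd X5 X4 u v | _ \<Rightarrow> 0)"
  by (rule ext, case_tac k) (simp_all add: N3_def bsimps)
lemma br_N4: "bracket N4 u v = (\<lambda>k. case k of Y1 \<Rightarrow> wd X1 X2 u v + wd X3 X6 u v + wd X5 X4 u v
   | Y2 \<Rightarrow> wd X6 X5 u v | _ \<Rightarrow> 0)"
  by (rule ext, case_tac k) (simp_all add: N4_def bsimps)
lemma br_N5: "bracket N5 u v = (\<lambda>k. case k of Y1 \<Rightarrow> wd X1 X6 u v + wd X3 X4 u v + wd X5 X2 u v
   | Y2 \<Rightarrow> wd X6 X3 u v + wd X4 X5 u v | _ \<Rightarrow> 0)"
  by (rule ext, case_tac k) (simp_all add: N5_def bsimps)

lemma lie_generic: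
  assumes "\<And>u v. bracket sc u v = (\<lambda>k. case k of Y1 \<Rightarrow> f1 u v | Y2 \<Rightarrow> f2 u v | _ \<Rightarrow> 0)"
  and "\<And>u. f1 u u = 0" "\<And>u. f2 u u = 0"
  and "\<And>u v. (\<forall>k. k \<noteq> Y1 \<and> k \<noteq> Y2 \<longrightarrow> v k = 0) \<Longrightarrow> f1 u v = 0 \<and> f2 u v = 0"
  shows "is_lie_algebra sc"
proof -
  have z: "bracket sc u (bracket sc v w) = vzero" for u v w
  proof -
    have "\<forall>k. k \<noteq> Y1 \<and> k \<noteq> Y2 \<longrightarrow> bracket sc v w k = 0"
      by (auto simp: assms(1) split: basis.split)
    from assms(4)[OF this, of u] show ?thesis
      by (auto simp: assms(1) vzero_def split: basis.split)
  qed
  have "bracket sc u u = vzero" for u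
    by (auto simp: vzero_def assms(1-3) split: basis.split)
  then show ?thesis unfolding is_lie_algebra_def
    by (simp add: z vadd_def vzero_def)
qed

lemma lieN1: "is_lie_algebra N1"
  by (rule lie_generic[OF br_N1]) (auto simp: wd_def)
lemma lieN2: "is_lie_algebra N2"
  by (rule lie_generic[OF br_N2]) (auto simp: wd_def)
lemma lieN3: "is_lie_algebra N3"
  by (rule lie_generic[OF br_N3]) (auto simp: wd_def)
lemma lieN4: "is_lie_algebra N4"
  by (rule lie_generic[OF br_N4]) (auto simp: wd_def)
lemma lieN5: "is_lie_algebra N5"
  by (rule lie_generic[OF br_N5]) (auto simp: wd_def)

lemma scale_in:
  assumes "csubspace K" "v \<in> K" "v = vscale c t" "c \<noteq> 0" shows "t \<in> K"
proof -
  have "vscale (1/c) v = t" using assms(3,4) by (auto simp: vscale_def)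
  with assms(1,2) show ?thesis unfolding csubspace_def by metis
qed

lemma scale_in2:
  assumes "csubspace K" "v \<in> K" "t2 \<in> K" "vadd v (vscale d t2) = vscale c t" "c \<noteq> 0" shows "t \<in> K"
proof -
  have "vadd v (vscale d t2) \<in> K" using assms(1-3) unfolding csubspace_def by blast
  then show ?thesis using scale_in[OF assms(1) _ assms(4,5)] by blast
qed

lemma no_both:
  assumes I: "lie_ideal sc I" and J: "lie_ideal sc J" and IJ: "I \<inter> J = {vzero}" and Jn: "J \<noteq> {vzero}"
  and y1: "e Y1 \<in> I" and y2: "e Y2 \<in> I"
  and ysp: "\<And>u v. bracket sc u v = vadd (vscale (bracket sc u v Y1) (e Y1)) (vscale (bracket sc u v Y2) (e Y2))"
  and nc: "\<And>j. (\<forall>m. bracket sc (e m) j = vzero) \<Longrightarrow> j = vadd (vscale (j Y1) (e Y1)) (vscale (j Y2) (e Y2))"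
  shows False
proof -
  have Is: "csubspace I" and Js: "csubspace J" using I J by (auto simp: lie_ideal_def)
  have span: "vadd (vscale a (e Y1)) (vscale b (e Y2)) \<in> I" for a b
    using Is y1 y2 unfolding csubspace_def by blast
  have "vzero \<in> J" using Js by (auto simp: csubspace_def)
  with Jn obtain j where j: "j \<in> J" "j \<noteq> vzero" by blast
  show False
  proof (cases "\<forall>m. bracket sc (e m) j = vzero")
    case True
    then have "j \<in> I" using nc span by metis
    with j IJ show False by blast
  next
    case False
    then obtain m where m: "bracket sc (e m) j \<noteq> vzero" by blast
    have "bracket sc (e m) j \<in> J" using J j by (auto simp: lie_ideal_def)
    moreover have "bracket sc (e m) j \<in> I" using span ysp by metis
    ultimately show False using IJ m by blast
  qed
qed

lemma via_X5:
  assumes ysp: "\<And>u v. bracket sc u v = vadd (vscale (bracket sc u v Y1) (e Y1)) (vscale (bracket sc u v Y2) (e Y2))"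
  and nc: "\<And>j. (\<forall>m. bracket sc (e m) j = vzero) \<Longrightarrow> j = vadd (vscale (j Y1) (e Y1)) (vscale (j Y2) (e Y2))"
  and force: "\<And>K w. lie_ideal sc K \<Longrightarrow> w \<in> K \<Longrightarrow> w X5 \<noteq> 0 \<Longrightarrow> e Y1 \<in> K \<and> e Y2 \<in> K"
  shows "indecomposable sc"
  unfolding indecomposable_def decomposable_def
proof clarify
  fix I J assume I: "lie_ideal sc I" and J: "lie_ideal sc J" and In: "I \<noteq> {vzero}" and Jn: "J \<noteq> {vzero}"
    and IJ: "I \<inter> J = {vzero}" and all: "\<forall>v. \<exists>i\<in>I. \<exists>j\<in>J. v = vadd i j"
  obtain i j where ij: "i \<in> I" "j \<in> J" "e X5 = vadd i j" using all by blast
  then have "i X5 + j X5 = 1" by (metis e_def vadd_def)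
  then have "i X5 \<noteq> 0 \<or> j X5 \<noteq> 0" by auto
  then show False
  proof
    assume "i X5 \<noteq> 0"
    from force[OF I ij(1) this] show False using no_both[OF I J IJ Jn _ _ ysp nc] by blast
  next
    assume "j X5 \<noteq> 0"
    from force[OF J ij(2) this] show False using no_both[OF J I _ In _ _ ysp nc] IJ by blast
  qed
qed

lemma ysp_gen:
  assumes "\<And>u v. bracket sc u v = (\<lambda>k. case k of Y1 \<Rightarrow> f1 u v | Y2 \<Rightarrow> f2 u v | _ \<Rightarrow> 0)"
  shows "bracket sc u v = vadd (vscale (bracket sc u v Y1) (e Y1)) (vscale (bracket sc u v Y2) (e Y2))"
  by (rule ext, case_tac x) (simp_all add: assms vadd_def vscale_def e_def)

lemma nc_N1: "(\<forall>m. bracket N1 (e m) j = vzero) \<Longrightarrow> j = vadd (vscale (j Y1) (e Y1)) (vscale (j Y2) (e Y2))"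
proof -
  assume h: "\<forall>m. bracket N1 (e m) j = vzero"
  have "\<And>m k. bracket N1 (e m) j k = 0" using h by (simp add: vzero_def)
  from this[of X1 Y1] this[of X1 Y2] this[of X2 Y1] this[of X2 Y2] this[of X3 Y1] this[of X3 Y2] this[of X4 Y1] this[of X4 Y2] this[of X5 Y1] this[of X5 Y2] this[of X6 Y1] this[of X6 Y2]
  show ?thesis
    by (intro ext, case_tac x) (simp_all add: br_N1 wd_def e_def vadd_def vscale_def)
qed

lemma nc_N2: "(\<forall>m. bracket N2 (e m) j = vzero) \<Longrightarrow> j = vadd (vscale (j Y1) (e Y1)) (vscale (j Y2) (e Y2))"
proof -
  assume h: "\<forall>m. bracket N2 (e m) j = vzero"
  have "\<And>m k. bracket N2 (e m) j k = 0" using h by (simp add: vzero_def)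
  from this[of X1 Y1] this[of X1 Y2] this[of X2 Y1] this[of X2 Y2] this[of X3 Y1] this[of X3 Y2] this[of X4 Y1] this[of X4 Y2] this[of X5 Y1] this[of X5 Y2] this[of X6 Y1] this[of X6 Y2]
  show ?thesis
    by (intro ext, case_tac x) (simp_all add: br_N2 wd_def e_def vadd_def vscale_def)
qed

lemma nc_N3: "(\<forall>m. bracket N3 (e m) j = vzero) \<Longrightarrow> j = vadd (vscale (j Y1) (e Y1)) (vscale (j Y2) (e Y2))"
proof -
  assume h: "\<forall>m. bracket N3 (e m) j = vzero"
  have "\<And>m k. bracket N3 (e m) j k = 0" using h by (simp add: vzero_def)
  from this[of X1 Y1] this[of X1 Y2] this[of X2 Y1] this[of X2 Y2] this[of X3 Y1] this[of X3 Y2] this[of X4 Y1] this[of X4 Y2] this[of X5 Y1] this[of X5 Y2] this[of X6 Y1] this[of X6 Y2]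
  show ?thesis
    by (intro ext, case_tac x) (simp_all add: br_N3 wd_def e_def vadd_def vscale_def)
qed

lemma nc_N4: "(\<forall>m. bracket N4 (e m) j = vzero) \<Longrightarrow> j = vadd (vscale (j Y1) (e Y1)) (vscale (j Y2) (e Y2))"
proof -
  assume h: "\<forall>m. bracket N4 (e m) j = vzero"
  have "\<And>m k. bracket N4 (e m) j k = 0" using h by (simp add: vzero_def)
  from this[of X1 Y1] this[of X1 Y2] this[of X2 Y1] this[of X2 Y2] this[of X3 Y1] this[of X3 Y2] this[of X4 Y1] this[of X4 Y2] this[of X5 Y1] this[of X5 Y2] this[of X6 Y1] this[of X6 Y2]
  show ?thesis
    by (intro ext, case_tac x) (simp_all add: br_N4 wd_def e_def vadd_def vscale_def)
qed

lemma nc_N5: "(\<forall>m. bracket N5 (e m) j = vzero) \<Longrightarrow> j = vadd (vscale (j Y1) (e Y1)) (vscale (j Y2) (e Y2))"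
proof -
  assume h: "\<forall>m. bracket N5 (e m) j = vzero"
  have "\<And>m k. bracket N5 (e m) j k = 0" using h by (simp add: vzero_def)
  from this[of X1 Y1] this[of X1 Y2] this[of X2 Y1] this[of X2 Y2] this[of X3 Y1] this[of X3 Y2] this[of X4 Y1] this[of X4 Y2] this[of X5 Y1] this[of X5 Y2] this[of X6 Y1] this[of X6 Y2]
  show ?thesis
    by (intro ext, case_tac x) (simp_all add: br_N5 wd_def e_def vadd_def vscale_def)
qed

lemma force_N2: assumes K: "lie_ideal N2 K" and w: "w \<in> K" and nz: "w X5 \<noteq> 0"
  shows "e Y1 \<in> K \<and> e Y2 \<in> K"
proof -
  have Ks: "csubspace K" using K by (simp add: lie_ideal_def)
  have br: "bracket N2 (e m) w \<in> K" for m using K w by (simp add: lie_ideal_def)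
  have "bracket N2 (e X2) w = vscale (- w X5) (e Y1)"
    by (rule ext, case_tac x) (simp_all add: br_N2 wd_def e_def vadd_def vscale_def)
  then have Y1: "e Y1 \<in> K" using scale_in[OF Ks br[of X2]] nz by simp
  have "bracket N2 (e X3) w = vscale (- w X5) (e Y2)"
    by (rule ext, case_tac x) (simp_all add: br_N2 wd_def e_def vadd_def vscale_def)
  then have Y2: "e Y2 \<in> K" using scale_in[OF Ks br[of X3]] nz by simp
  show ?thesis using Y1 Y2 by blast
qed

lemma force_N3: assumes K: "lie_ideal N3 K" and w: "w \<in> K" and nz: "w X5 \<noteq> 0"
  shows "e Y1 \<in> K \<and> e Y2 \<in> K"
proof -
  have Ks: "csubspace K" using K by (simp add: lie_ideal_def)
  have br: "bracket N3 (e m) w \<in> K" for m using K w by (simp add: lie_ideal_def)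
  have "bracket N3 (e X4) w = vscale (- w X5) (e Y2)"
    by (rule ext, case_tac x) (simp_all add: br_N3 wd_def e_def vadd_def vscale_def)
  then have Y2: "e Y2 \<in> K" using scale_in[OF Ks br[of X4]] nz by simp
  have "vadd (bracket N3 (e X6) w) (vscale (w X3) (e Y2)) = vscale (w X5) (e Y1)"
    by (rule ext, case_tac x) (simp_all add: br_N3 wd_def e_def vadd_def vscale_def)
  then have Y1: "e Y1 \<in> K" using scale_in2[OF Ks br[of X6] Y2] nz by blast
  show ?thesis using Y1 Y2 by blast
qed

lemma force_N4: assumes K: "lie_ideal N4 K" and w: "w \<in> K" and nz: "w X5 \<noteq> 0"
  shows "e Y1 \<in> K \<and> e Y2 \<in> K"
proof -
  have Ks: "csubspace K" using K by (simp add: lie_ideal_def)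
  have br: "bracket N4 (e m) w \<in> K" for m using K w by (simp add: lie_ideal_def)
  have "bracket N4 (e X4) w = vscale (- w X5) (e Y1)"
    by (rule ext, case_tac x) (simp_all add: br_N4 wd_def e_def vadd_def vscale_def)
  then have Y1: "e Y1 \<in> K" using scale_in[OF Ks br[of X4]] nz by simp
  have "vadd (bracket N4 (e X6) w) (vscale (w X3) (e Y1)) = vscale (w X5) (e Y2)"
    by (rule ext, case_tac x) (simp_all add: br_N4 wd_def e_def vadd_def vscale_def)
  then have Y2: "e Y2 \<in> K" using scale_in2[OF Ks br[of X6] Y1] nz by blast
  show ?thesis using Y1 Y2 by blast
qed

lemma force_N5: assumes K: "lie_ideal N5 K" and w: "w \<in> K" and nz: "w X5 \<noteq> 0"
  shows "e Y1 \<in> K \<and> e Y2 \<in> K"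
proof -
  have Ks: "csubspace K" using K by (simp add: lie_ideal_def)
  have br: "bracket N5 (e m) w \<in> K" for m using K w by (simp add: lie_ideal_def)
  have "bracket N5 (e X2) w = vscale (- w X5) (e Y1)"
    by (rule ext, case_tac x) (simp_all add: br_N5 wd_def e_def vadd_def vscale_def)
  then have Y1: "e Y1 \<in> K" using scale_in[OF Ks br[of X2]] nz by simp
  have "vadd (bracket N5 (e X4) w) (vscale (w X3) (e Y1)) = vscale (w X5) (e Y2)"
    by (rule ext, case_tac x) (simp_all add: br_N5 wd_def e_def vadd_def vscale_def)
  then have Y2: "e Y2 \<in> K" using scale_in2[OF Ks br[of X4] Y1] nz by blast
  show ?thesis using Y1 Y2 by blast
qed

lemma indec_N2: "indecomposable N2"
  by (rule via_X5[OF ysp_gen[OF br_N2] nc_N2 force_N2])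

lemma indec_N3: "indecomposable N3"
  by (rule via_X5[OF ysp_gen[OF br_N3] nc_N3 force_N3])

lemma indec_N4: "indecomposable N4"
  by (rule via_X5[OF ysp_gen[OF br_N4] nc_N4 force_N4])

lemma indec_N5: "indecomposable N5"
  by (rule via_X5[OF ysp_gen[OF br_N5] nc_N5 force_N5])

lemma forceN1:
  assumes K: "lie_ideal N1 K" and w: "w \<in> K"
  shows "w X1 \<noteq> 0 \<Longrightarrow> e Y1 \<in> K" "w X3 \<noteq> 0 \<Longrightarrow> e Y2 \<in> K"
    "w X5 \<noteq> 0 \<Longrightarrow> vadd (e Y1) (e Y2) \<in> K"
proof -
  have Ks: "csubspace K" using K by (simp add: lie_ideal_def)
  have br: "bracket N1 (e m) w \<in> K" for m using K w by (simp add: lie_ideal_def)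
  have "bracket N1 (e X2) w = vscale (- w X1) (e Y1)" by (rule ext, case_tac x) (simp_all add: br_N1 wd_def e_def vadd_def vscale_def)
  then show "w X1 \<noteq> 0 \<Longrightarrow> e Y1 \<in> K" using scale_in[OF Ks br[of X2]] by simp
  have "bracket N1 (e X4) w = vscale (- w X3) (e Y2)" by (rule ext, case_tac x) (simp_all add: br_N1 wd_def e_def vadd_def vscale_def)
  then show "w X3 \<noteq> 0 \<Longrightarrow> e Y2 \<in> K" using scale_in[OF Ks br[of X4]] by simp
  have "bracket N1 (e X6) w = vscale (- w X5) (vadd (e Y1) (e Y2))" by (rule ext, case_tac x) (simp_all add: br_N1 wd_def e_def vadd_def vscale_def)
  then show "w X5 \<noteq> 0 \<Longrightarrow> vadd (e Y1) (e Y2) \<in> K" using scale_in[OF Ks br[of X6]] by simp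
qed

lemma twoN1:
  assumes Ks: "csubspace K" and C: "vadd (e Y1) (e Y2) \<in> K" and AB: "e Y1 \<in> K \<or> e Y2 \<in> K"
  shows "e Y1 \<in> K \<and> e Y2 \<in> K"
proof -
  have "vadd (vadd (e Y1) (e Y2)) (vscale (-1) (e Y1)) = vscale 1 (e Y2)"
    by (rule ext) (simp add: vadd_def vscale_def)
  moreover have "vadd (vadd (e Y1) (e Y2)) (vscale (-1) (e Y2)) = vscale 1 (e Y1)"
    by (rule ext) (simp add: vadd_def vscale_def)
  ultimately show ?thesis using AB scale_in2[OF Ks C] by fastforce
qed

lemma indec_N1: "indecomposable N1"
  unfolding indecomposable_def decomposable_def
proof clarify
  fix I J assume I: "lie_ideal N1 I" and J: "lie_ideal N1 J" and In: "I \<noteq> {vzero}" and Jn: "J \<noteq> {vzero}"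
    and IJ: "I \<inter> J = {vzero}" and all: "\<forall>v. \<exists>i\<in>I. \<exists>j\<in>J. v = vadd i j"
  have Is: "csubspace I" and Js: "csubspace J" using I J by (auto simp: lie_ideal_def)
  have nI: "\<not> (e Y1 \<in> I \<and> e Y2 \<in> I)"
    using no_both[OF I J IJ Jn _ _ ysp_gen[OF br_N1] nc_N1] by blast
  have nJ: "\<not> (e Y1 \<in> J \<and> e Y2 \<in> J)"
    using no_both[OF J I _ In _ _ ysp_gen[OF br_N1] nc_N1] IJ by blast
  have split: "\<exists>K\<in>{I,J}. \<exists>w\<in>K. w m \<noteq> 0" for m
  proof -
    obtain i j where ij: "i \<in> I" "j \<in> J" "e m = vadd i j" using all by blast
    then have "i m + j m = 1" by (metis e_def vadd_def)
    then have "i m \<noteq> 0 \<or> j m \<noteq> 0" by auto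
    then show ?thesis using ij by blast
  qed
  have A: "e Y1 \<in> I \<or> e Y1 \<in> J" using split[of X1] forceN1(1)[OF I] forceN1(1)[OF J] by blast
  have B: "e Y2 \<in> I \<or> e Y2 \<in> J" using split[of X3] forceN1(2)[OF I] forceN1(2)[OF J] by blast
  have C: "vadd (e Y1) (e Y2) \<in> I \<or> vadd (e Y1) (e Y2) \<in> J"
    using split[of X5] forceN1(3)[OF I] forceN1(3)[OF J] by blast
  show False using A B C twoN1[OF Is] twoN1[OF Js] nI nJ by blast
qed

theorem theorem5:
  shows "\<forall>sc\<in>{N1, N2, N3, N4, N5}. is_lie_algebra sc \<and> indecomposable sc"
  using lieN1 lieN2 lieN3 lieN4 lieN5 indec_N1 indec_N2 indec_N3 indec_N4 indec_N5 by blast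

end
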